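(* There exist $d\ge1$, $\mu\in\mathbb{R}^d$, a symmetric positive semidefinite $\Sigma\in\mathbb{R}^{d\times d}$, $c\in\mathbb{R}^d$ with $c_f>0$, $\alpha>0$ and $\delta\in(0,1/2)$ such that the problem $$\min_{e\in\mathbb{R}^d}\ \sum_f c_f|e_f|\quad\text{s.t.}\quad \alpha-\mu^\top e-\Phi^{-1}(\delta)\,\|\Sigma^{1/2}e\|_2\le0$$ has an optimal solution, and every optimal solution has at least two nonzero coordinates (i.e. the agent must invest effort into more than one feature).
   Context: $\Phi$ is the standard normal CDF. The constraint is equivalent to $\mathbb{P}_{Z\sim\mathcal{N}(\mu,\Sigma)}[Z^\top e\ge\alpha]\ge1-\delta$, where $Z$ represents the agent's Gaussian belief about the vector $\mathbb{C}h$ of total feature contributions under partially incomplete information; the objective is the weighted $\ell_1$ cost of effort. *)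

theory Defs
  imports "HOL-Probability.Probability"
begin

text \<open>Vectors in R^d are functions nat => real (only indices < d matter);
  d x d matrices are functions nat => nat => real (only indices < d matter).\<close>

definition Phi :: "real \<Rightarrow> real" where
  "Phi x = measure (density lborel std_normal_density) {..x}"

definition Phi_inv :: "real \<Rightarrow> real" where
  "Phi_inv p = (THE x. Phi x = p)"

definition mat_symmetric :: "nat \<Rightarrow> (nat \<Rightarrow> nat \<Rightarrow> real) \<Rightarrow> bool" where
  "mat_symmetric d A \<longleftrightarrow> (\<forall>i<d. \<forall>j<d. A i j = A j i)"

definition mat_psd :: "nat \<Rightarrow> (nat \<Rightarrow> nat \<Rightarrow> real) \<Rightarrow> bool" where
  "mat_psd d A \<longleftrightarrow> mat_symmetric d A \<and>
     (\<forall>x::nat \<Rightarrow> real. (\<Sum>i<d. \<Sum>j<d. x i * A i j * x j) \<ge> 0)"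

definition is_psd_sqrt :: "nat \<Rightarrow> (nat \<Rightarrow> nat \<Rightarrow> real) \<Rightarrow> (nat \<Rightarrow> nat \<Rightarrow> real) \<Rightarrow> bool" where
  "is_psd_sqrt d S Sig \<longleftrightarrow> mat_psd d S \<and>
     (\<forall>i<d. \<forall>j<d. (\<Sum>k<d. S i k * S k j) = Sig i j)"

definition mat_vec :: "nat \<Rightarrow> (nat \<Rightarrow> nat \<Rightarrow> real) \<Rightarrow> (nat \<Rightarrow> real) \<Rightarrow> nat \<Rightarrow> real" where
  "mat_vec d A x = (\<lambda>i. \<Sum>j<d. A i j * x j)"

definition norm2 :: "nat \<Rightarrow> (nat \<Rightarrow> real) \<Rightarrow> real" where
  "norm2 d x = sqrt (\<Sum>i<d. (x i)\<^sup>2)"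

definition dot :: "nat \<Rightarrow> (nat \<Rightarrow> real) \<Rightarrow> (nat \<Rightarrow> real) \<Rightarrow> real" where
  "dot d x y = (\<Sum>i<d. x i * y i)"

definition cost :: "nat \<Rightarrow> (nat \<Rightarrow> real) \<Rightarrow> (nat \<Rightarrow> real) \<Rightarrow> real" where
  "cost d c e = (\<Sum>f<d. c f * \<bar>e f\<bar>)"

definition feasible ::
  "nat \<Rightarrow> (nat \<Rightarrow> real) \<Rightarrow> (nat \<Rightarrow> nat \<Rightarrow> real) \<Rightarrow> real \<Rightarrow> real \<Rightarrow> (nat \<Rightarrow> real) \<Rightarrow> bool" where
  "feasible d mu S alpha delta e \<longleftrightarrow>
     alpha - dot d mu e - Phi_inv delta * norm2 d (mat_vec d S e) \<le> 0"

definition optimal ::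
  "nat \<Rightarrow> (nat \<Rightarrow> real) \<Rightarrow> (nat \<Rightarrow> nat \<Rightarrow> real) \<Rightarrow> (nat \<Rightarrow> real) \<Rightarrow> real \<Rightarrow> real \<Rightarrow> (nat \<Rightarrow> real) \<Rightarrow> bool" where
  "optimal d mu S c alpha delta e \<longleftrightarrow> feasible d mu S alpha delta e \<and>
     (\<forall>e'. feasible d mu S alpha delta e' \<longrightarrow> cost d c e \<le> cost d c e')"

end

theory Submission imports Defs begin

abbreviation "NM \<equiv> density lborel std_normal_density"

lemma NM_prob: "prob_space NM"
  using prob_space_normal_density by simp

lemma NM_sym: "emeasure NM {..a} = emeasure NM {-a..}"
proof -
  have "emeasure NM {..a} = (\<integral>\<^sup>+x. ennreal (std_normal_density x) * indicator {..a} x \<partial>lborel)"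
    by (simp add: emeasure_density)
  also have "\<dots> = ennreal \<bar>-1\<bar> * (\<integral>\<^sup>+x. ennreal (std_normal_density (0 + -1 * x)) * indicator {..a} (0 + -1 * x) \<partial>lborel)"
    by (rule nn_integral_real_affine) auto
  also have "\<dots> = (\<integral>\<^sup>+x. ennreal (std_normal_density x) * indicator {-a..} x \<partial>lborel)"
    by (simp add: std_normal_density_def indicator_def) (rule nn_integral_cong, auto)
  also have "\<dots> = emeasure NM {-a..}"
    by (simp add: emeasure_density)
  finally show ?thesis .
qed

lemma NM_pos: assumes "x < y" shows "measure NM {x<..y} > 0"
proof -
  interpret prob_space NM by (rule NM_prob)
  have "emeasure NM {x<..y} \<noteq> 0"
  proof
    assume "emeasure NM {x<..y} = 0"
    hence "(\<integral>\<^sup>+z. ennreal (std_normal_density z) * indicator {x<..y} z \<partial>lborel) = 0"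
      by (simp add: emeasure_density)
    hence "AE z in lborel. ennreal (std_normal_density z) * indicator {x<..y} z = 0"
      by (subst (asm) nn_integral_0_iff_AE) auto
    hence "AE z in lborel. z \<notin> {x<..y}"
      by eventually_elim (auto simp: std_normal_density_def indicator_def)
    hence "emeasure lborel {x<..y} = 0"
      by (subst AE_iff_measurable[symmetric, where P="\<lambda>z. z \<notin> {x<..y}"]) auto
    with assms show False by simp
  qed
  thus ?thesis by (simp add: emeasure_eq_measure zero_less_measure_iff)
qed

lemma Phi_eq: "Phi x = measure NM {..x}" by (simp add: Phi_def)

lemma Phi_mono: assumes "x < y" shows "Phi x < Phi y"
proof -
  interpret prob_space NM by (rule NM_prob)
  have "measure NM {..y} = measure NM ({..x} \<union> {x<..y})"
    using assms by (intro arg_cong[where f="measure NM"]) auto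
  also have "\<dots> = measure NM {..x} + measure NM {x<..y}"
    by (intro finite_measure_Union) auto
  finally show ?thesis using NM_pos[OF assms] by (simp add: Phi_def)
qed

lemma Phi_m1: "0 < Phi (-1)" "Phi (-1) < 1/2"
proof -
  interpret prob_space NM by (rule NM_prob)
  have "Phi (-2) \<ge> 0" by (simp add: Phi_def)
  thus "0 < Phi (-1)" using Phi_mono[of "-2" "-1"] by simp
  have s: "measure NM {..-1} = measure NM {1..}"
    using NM_sym[of "-1"] by (simp add: measure_def)
  have "measure NM {..1/2} = measure NM ({..-1} \<union> {-1<..1/2})"
    by (intro arg_cong[where f="measure NM"]) auto
  also have "\<dots> = measure NM {..-1} + measure NM {-1<..1/2}"
    by (intro finite_measure_Union) auto
  finally have a: "measure NM {..1/2} = measure NM {..-1} + measure NM {-1<..1/2}" .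
  have "measure NM (space NM - {..1/2}) = 1 - measure NM {..1/2}"
    by (intro prob_compl) auto
  moreover have "space NM - {..1/2} = {1/2<..}" by auto
  ultimately have b: "measure NM {1/2<..} = 1 - measure NM {..1/2}" by simp
  have "measure NM {1..} \<le> measure NM {1/2<..}" by (intro finite_measure_mono) auto
  with a b s NM_pos[of "-1" "1/2"] show "Phi (-1) < 1/2" by (simp add: Phi_def)
qed

lemma Phi_inv_m1: "Phi_inv (Phi (-1)) = -1"
  unfolding Phi_inv_def
proof (rule the_equality)
  fix x assume "Phi x = Phi (-1)"
  thus "x = -1" using Phi_mono[of x "-1"] Phi_mono[of "-1" x] by (cases x "-1::real" rule: linorder_cases) auto
qed simp


definition Id2 :: "nat \<Rightarrow> nat \<Rightarrow> real" where "Id2 i j = (if i = j then 1 else 0)"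

lemma feas_iff: "feasible 2 (\<lambda>_. 1) Id2 1 (Phi (-1)) e \<longleftrightarrow> 1 \<le> e 0 + e 1 - sqrt ((e 0)\<^sup>2 + (e 1)\<^sup>2)"
  by (simp add: feasible_def Phi_inv_m1 dot_def norm2_def mat_vec_def Id2_def numeral_2_eq_2) arith

lemma feas_nz: assumes "feasible 2 (\<lambda>_. 1) Id2 1 (Phi (-1)) e" shows "e 0 \<noteq> 0" "e 1 \<noteq> 0"
  using assms unfolding feas_iff by auto

lemma feas_cost: assumes "feasible 2 (\<lambda>_. 1) Id2 1 (Phi (-1)) e"
  shows "2 + sqrt 2 \<le> cost 2 (\<lambda>_. 1) e"
proof -
  define a b where "a = e 0" "b = e 1"
  define L where "L = \<bar>a\<bar> + \<bar>b\<bar>"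
  define N where "N = sqrt (a\<^sup>2 + b\<^sup>2)"
  have c: "cost 2 (\<lambda>_. 1) e = L" by (simp add: cost_def L_def a_b_def numeral_2_eq_2)
  have h: "1 \<le> L - N" using assms unfolding feas_iff a_b_def[symmetric] L_def N_def by linarith
  have "L\<^sup>2 \<le> (sqrt 2 * N)\<^sup>2"
  proof -
    have "0 \<le> (\<bar>a\<bar> - \<bar>b\<bar>)\<^sup>2" by simp
    hence k: "2 * \<bar>a\<bar> * \<bar>b\<bar> \<le> a\<^sup>2 + b\<^sup>2" by (simp add: power2_eq_square algebra_simps)
    have k2: "a\<^sup>2 + b\<^sup>2 + 2 * \<bar>a\<bar> * \<bar>b\<bar> \<le> 2 * (a\<^sup>2 + b\<^sup>2)"
      using add_left_mono[OF k, of "a\<^sup>2 + b\<^sup>2"] by (simp only: mult_2)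
    moreover have "L\<^sup>2 = a\<^sup>2 + b\<^sup>2 + 2 * \<bar>a\<bar> * \<bar>b\<bar>"
      by (simp add: L_def power2_eq_square algebra_simps)
    moreover have "(sqrt 2 * N)\<^sup>2 = 2 * (a\<^sup>2 + b\<^sup>2)"
      by (simp add: N_def power_mult_distrib)
    ultimately show ?thesis using k2 by (simp only:)
  qed
  hence LN: "L \<le> sqrt 2 * N" by (rule power2_le_imp_le) (simp add: N_def)
  have s2: "sqrt 2 * sqrt 2 = 2" by simp
  have "L / sqrt 2 \<le> N" using LN by (simp add: divide_le_eq mult.commute)
  hence "1 \<le> L - L / sqrt 2" using h by linarith
  hence "sqrt 2 * 1 \<le> sqrt 2 * (L - L / sqrt 2)" by (intro mult_left_mono) auto
  hence "sqrt 2 \<le> L * (sqrt 2 - 1)" by (simp add: algebra_simps)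
  hence "sqrt 2 * (sqrt 2 + 1) \<le> L * (sqrt 2 - 1) * (sqrt 2 + 1)"
    by (intro mult_right_mono) auto
  hence "2 + sqrt 2 \<le> L" using s2 by (simp add: algebra_simps)
  thus ?thesis using c by simp
qed

theorem lemma6:
  shows "\<exists>(d::nat) (mu::nat \<Rightarrow> real) (Sig::nat \<Rightarrow> nat \<Rightarrow> real) (S::nat \<Rightarrow> nat \<Rightarrow> real)
           (c::nat \<Rightarrow> real) (alpha::real) (delta::real).
     d \<ge> 1 \<and> mat_psd d Sig \<and> is_psd_sqrt d S Sig \<and>
     (\<forall>f<d. c f > 0) \<and> alpha > 0 \<and> 0 < delta \<and> delta < 1/2 \<and>
     (\<exists>e. optimal d mu S c alpha delta e) \<and>
     (\<forall>e. optimal d mu S c alpha delta e \<longrightarrow> card {f. f < d \<and> e f \<noteq> 0} \<ge> 2)"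
proof -
  have A: "mat_psd 2 Id2"
    by (simp add: mat_psd_def mat_symmetric_def Id2_def numeral_2_eq_2)
  have B: "is_psd_sqrt 2 Id2 Id2"
    by (simp add: is_psd_sqrt_def mat_psd_def mat_symmetric_def Id2_def numeral_2_eq_2)
  define s :: real where "s = 1 + sqrt 2 / 2"
  have sp: "s > 0" by (simp add: s_def add_pos_nonneg)
  have "sqrt (s\<^sup>2 + s\<^sup>2) = sqrt 2 * s"
    using sp by (simp add: real_sqrt_mult power2_eq_square)
  hence fe: "feasible 2 (\<lambda>_. 1) Id2 1 (Phi (-1)) (\<lambda>_. s)"
    unfolding feas_iff by (simp add: s_def algebra_simps)
  have "cost 2 (\<lambda>_. 1) (\<lambda>_. s) = 2 + sqrt 2"
    using sp by (simp add: cost_def numeral_2_eq_2 s_def)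
  hence C: "\<exists>e. optimal 2 (\<lambda>_. 1) Id2 (\<lambda>_. 1) 1 (Phi (-1)) e"
    using fe feas_cost by (auto simp: optimal_def)
  have D: "\<forall>e. optimal 2 (\<lambda>_. 1) Id2 (\<lambda>_. 1) 1 (Phi (-1)) e \<longrightarrow> card {f. f < 2 \<and> e f \<noteq> 0} \<ge> 2"
  proof (intro allI impI)
    fix e assume "optimal 2 (\<lambda>_. 1) Id2 (\<lambda>_. 1) 1 (Phi (-1)) e"
    hence "feasible 2 (\<lambda>_. 1) Id2 1 (Phi (-1)) e" by (simp add: optimal_def)
    hence "{f. f < 2 \<and> e f \<noteq> 0} = {0, 1}" using feas_nz by auto
    thus "card {f. f < 2 \<and> e f \<noteq> 0} \<ge> 2" by simp
  qed
  have E: "(2::nat) \<ge> 1" "\<forall>f<(2::nat). (\<lambda>_. 1::real) f > 0" "(1::real) > 0" by auto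
  show ?thesis
    apply (rule exI[where x=2], rule exI[where x="\<lambda>_. 1"], rule exI[where x=Id2], rule exI[where x=Id2],
           rule exI[where x="\<lambda>_. 1"], rule exI[where x=1], rule exI[where x="Phi (-1)"])
    using A B C D E Phi_m1 by blast
qed

end
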